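(* Let $\mathbf{k}$ be a field, $\sigma\subset N_{\mathbb{Q}}$ a nonzero strongly convex polyhedral cone, and $\partial$ a nontrivial homogeneous LFIHD of degree $e$ on $A=\mathbf{k}[\sigma^\vee\cap M]$. Then: (i) there is a ray $\rho$ of $\sigma$ such that $\ker\partial=\mathbf{k}[\rho^\star\cap M]$, where $\rho^\star=\{m\in\sigma^\vee:\langle m,\rho\rangle=0\}$; (ii) $e$ is a Demazure root of $\sigma$ with distinguished ray $\rho$.
   Context: An LFIHD (locally finite iterative higher derivation) on a $\mathbf{k}$-algebra $A$ is a sequence $\partial=(\partial^{(i)})_{i\in\mathbb{N}}$ of $\mathbf{k}$-linear maps $A\to A$ with $\partial^{(0)}=\mathrm{id}$, $\partial^{(i)}(fg)=\sum_{j=0}^i\partial^{(j)}(f)\partial^{(i-j)}(g)$, for each $f$ there is $r$ with $\partial^{(i)}(f)=0$ for $i\ge r$, and $\partial^{(i)}\circ\partial^{(j)}=\binom{i+j}{i}\partial^{(i+j)}$. Its kernel is $\{f:\partial^{(i)}(f)=0\ \forall i>0\}$; it is trivial if the kernel is $A$. For an $M$-graded $A$, $\partial$ is homogeneous of degree $e\in M$ if $\partial^{(i)}(A_m)\subset A_{m+ie}$ for all $i,m$. A ray of $\sigma$ is identified with its primitive lattice vector in $N$. A Demazure root of $\sigma$ is $e\in M$ such that there is a ray $\rho$ of $\sigma$ with $\langle e,\rho\rangle=-1$ and $\langle e,\rho'\rangle\ge0$ for every other ray $\rho'$; $\rho$ is its distinguished ray. *)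

theory Defs
  imports "HOL-Analysis.Finite_Cartesian_Product" "HOL-Library.Poly_Mapping"
begin

text \<open>Lattices: N = M = int^'n (dual to each other via the standard pairing),
  N_Q = rat^'n, M_Q = rat^'n.\<close>

definition ratv :: "int ^ 'n::finite \<Rightarrow> rat ^ 'n" where
  "ratv m = (\<chi> i. of_int (m $ i))"

definition qpair :: "rat ^ 'n::finite \<Rightarrow> rat ^ 'n \<Rightarrow> rat" where
  "qpair u v = (\<Sum>i\<in>UNIV. u $ i * v $ i)"

definition ipair :: "int ^ 'n::finite \<Rightarrow> int ^ 'n \<Rightarrow> int" where
  "ipair m n = (\<Sum>i\<in>UNIV. m $ i * n $ i)"

definition polyhedral_cone :: "(rat ^ 'n::finite) set \<Rightarrow> bool" where
  "polyhedral_cone \<sigma> \<longleftrightarrow> (\<exists>G. finite G \<and>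
     \<sigma> = {(\<Sum>v\<in>G. c v *s v) | c. \<forall>v\<in>G. c v \<ge> 0})"

definition strongly_convex :: "(rat ^ 'n::finite) set \<Rightarrow> bool" where
  "strongly_convex \<sigma> \<longleftrightarrow> \<sigma> \<inter> uminus ` \<sigma> = {0}"

definition dual_lattice :: "(rat ^ 'n::finite) set \<Rightarrow> (int ^ 'n) set" where
  "dual_lattice \<sigma> = {m. \<forall>v\<in>\<sigma>. qpair (ratv m) v \<ge> 0}"

definition primitive :: "int ^ 'n::finite \<Rightarrow> bool" where
  "primitive \<rho> \<longleftrightarrow> \<rho> \<noteq> 0 \<and> (\<forall>w (k::int). \<rho> = k *s w \<longrightarrow> \<bar>k\<bar> = 1)"

text \<open>A ray (one-dimensional face) of sigma, identified with its primitive lattice generator.\<close>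
definition is_ray :: "(rat ^ 'n::finite) set \<Rightarrow> int ^ 'n \<Rightarrow> bool" where
  "is_ray \<sigma> \<rho> \<longleftrightarrow> primitive \<rho> \<and>
     (\<exists>u. (\<forall>v\<in>\<sigma>. qpair u v \<ge> 0) \<and>
          {v\<in>\<sigma>. qpair u v = 0} = {t *s ratv \<rho> | t. t \<ge> 0})"

definition rho_star :: "(rat ^ 'n::finite) set \<Rightarrow> int ^ 'n \<Rightarrow> (int ^ 'n) set" where
  "rho_star \<sigma> \<rho> = {m \<in> dual_lattice \<sigma>. ipair m \<rho> = 0}"

text \<open>The semigroup algebra k[S] for S a subset of M, as a subset of the group algebra k[M].\<close>
definition semigroup_alg :: "(int ^ 'n::finite) set \<Rightarrow> ((int ^ 'n) \<Rightarrow>\<^sub>0 'k::field) set" where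
  "semigroup_alg S = {f. Poly_Mapping.keys f \<subseteq> S}"

definition lfihd :: "(int ^ 'n::finite) set \<Rightarrow>
    (nat \<Rightarrow> ((int ^ 'n) \<Rightarrow>\<^sub>0 'k::field) \<Rightarrow> ((int ^ 'n) \<Rightarrow>\<^sub>0 'k)) \<Rightarrow> bool" where
  "lfihd S D \<longleftrightarrow>
     (\<forall>i. \<forall>f\<in>semigroup_alg S. D i f \<in> semigroup_alg S) \<and>
     (\<forall>i. \<forall>f\<in>semigroup_alg S. \<forall>g\<in>semigroup_alg S. D i (f + g) = D i f + D i g) \<and>
     (\<forall>i c. \<forall>f\<in>semigroup_alg S. D i (Poly_Mapping.single 0 c * f) = Poly_Mapping.single 0 c * D i f) \<and>
     (\<forall>f\<in>semigroup_alg S. D 0 f = f) \<and>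
     (\<forall>i. \<forall>f\<in>semigroup_alg S. \<forall>g\<in>semigroup_alg S.
        D i (f * g) = (\<Sum>j\<le>i. D j f * D (i - j) g)) \<and>
     (\<forall>f\<in>semigroup_alg S. \<exists>r. \<forall>i\<ge>r. D i f = 0) \<and>
     (\<forall>i j. \<forall>f\<in>semigroup_alg S. D i (D j f) = of_nat ((i + j) choose i) * D (i + j) f)"

definition lfihd_kernel :: "(int ^ 'n::finite) set \<Rightarrow>
    (nat \<Rightarrow> ((int ^ 'n) \<Rightarrow>\<^sub>0 'k::field) \<Rightarrow> ((int ^ 'n) \<Rightarrow>\<^sub>0 'k)) \<Rightarrow> ((int ^ 'n) \<Rightarrow>\<^sub>0 'k) set" where
  "lfihd_kernel S D = {f \<in> semigroup_alg S. \<forall>i>0. D i f = 0}"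

text \<open>Homogeneous of degree e w.r.t. the M-grading A_m = k chi^m (A_m = 0 for m outside S).\<close>
definition homogeneous_lfihd :: "(int ^ 'n::finite) set \<Rightarrow>
    (nat \<Rightarrow> ((int ^ 'n) \<Rightarrow>\<^sub>0 'k::field) \<Rightarrow> ((int ^ 'n) \<Rightarrow>\<^sub>0 'k)) \<Rightarrow> int ^ 'n \<Rightarrow> bool" where
  "homogeneous_lfihd S D e \<longleftrightarrow>
     (\<forall>i m c. m \<in> S \<longrightarrow> (\<exists>c'. D i (Poly_Mapping.single m c) = Poly_Mapping.single (m + int i *s e) c'))"

definition demazure_root_with :: "(rat ^ 'n::finite) set \<Rightarrow> int ^ 'n \<Rightarrow> int ^ 'n \<Rightarrow> bool" where
  "demazure_root_with \<sigma> e \<rho> \<longleftrightarrow> is_ray \<sigma> \<rho> \<and> ipair e \<rho> = -1 \<and>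
     (\<forall>\<rho>'. is_ray \<sigma> \<rho>' \<and> \<rho>' \<noteq> \<rho> \<longrightarrow> ipair e \<rho>' \<ge> 0)"

end

theory Submission
  imports Defs
begin


lemma qpair_add_r[simp]: "qpair u (v + w) = qpair u v + qpair u w"
  by (simp add: qpair_def algebra_simps sum.distrib)
lemma qpair_add_l[simp]: "qpair (u + v) w = qpair u w + qpair v w"
  by (simp add: qpair_def algebra_simps sum.distrib)
lemma qpair_diff_r[simp]: "qpair u (v - w) = qpair u v - qpair u w"
  by (simp add: qpair_def algebra_simps sum_subtractf)
lemma qpair_diff_l[simp]: "qpair (u - v) w = qpair u w - qpair v w"
  by (simp add: qpair_def algebra_simps sum_subtractf)
lemma qpair_minus_r[simp]: "qpair u (- v) = - qpair u v"
  by (simp add: qpair_def sum_negf)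
lemma qpair_minus_l[simp]: "qpair (- u) v = - qpair u v"
  by (simp add: qpair_def sum_negf)
lemma qpair_smult_r[simp]: "qpair u (c *s v) = c * qpair u v"
  by (simp add: qpair_def sum_distrib_left algebra_simps)
lemma qpair_smult_l[simp]: "qpair (c *s u) v = c * qpair u v"
  by (simp add: qpair_def sum_distrib_left algebra_simps)
lemma qpair_zero_r[simp]: "qpair u 0 = 0" by (simp add: qpair_def)
lemma qpair_zero_l[simp]: "qpair 0 u = 0" by (simp add: qpair_def)
lemma qpair_sum_r: "qpair u (\<Sum>x\<in>A. f x) = (\<Sum>x\<in>A. qpair u (f x))"
  by (induct A rule: infinite_finite_induct) auto
lemma qpair_sum_l: "qpair (\<Sum>x\<in>A. f x) u = (\<Sum>x\<in>A. qpair (f x) u)"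
  by (induct A rule: infinite_finite_induct) auto
lemma qpair_self_pos: "h \<noteq> 0 \<Longrightarrow> qpair h h > 0"
proof -
  assume "h \<noteq> 0"
  then obtain i where i: "h $ i \<noteq> 0" by (auto simp: vec_eq_iff)
  have "qpair h h = (\<Sum>j\<in>UNIV. h$j * h$j)" by (simp add: qpair_def)
  also have "\<dots> \<ge> h$i * h$i" by (rule member_le_sum) auto
  moreover have "0 < h$i * h$i" using i by (auto simp add: zero_less_mult_iff linorder_neq_iff)
  ultimately show ?thesis by simp
qed

lemma ratv_add[simp]: "ratv (a + b) = ratv a + ratv b" by (simp add: ratv_def vec_eq_iff)
lemma ratv_diff[simp]: "ratv (a - b) = ratv a - ratv b" by (simp add: ratv_def vec_eq_iff)
lemma ratv_minus[simp]: "ratv (- a) = - ratv a" by (simp add: ratv_def vec_eq_iff)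
lemma ratv_zero[simp]: "ratv 0 = 0" by (simp add: ratv_def vec_eq_iff)
lemma ratv_smult[simp]: "ratv (k *s a) = of_int k *s ratv a" by (simp add: ratv_def vec_eq_iff)
lemma ratv_inj: "ratv a = ratv b \<longleftrightarrow> a = b" by (simp add: ratv_def vec_eq_iff)
lemma ipair_qpair: "of_int (ipair m n) = qpair (ratv m) (ratv n)"
  by (simp add: ipair_def qpair_def ratv_def)
lemma ipair_add_l[simp]: "ipair (a + b) n = ipair a n + ipair b n"
  by (simp add: ipair_def algebra_simps sum.distrib)
lemma ipair_smult_l[simp]: "ipair (k *s a) n = k * ipair a n"
  by (simp add: ipair_def sum_distrib_left algebra_simps)
lemma ipair_smult_r[simp]: "ipair a (k *s n) = k * ipair a n"
  by (simp add: ipair_def sum_distrib_left algebra_simps)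

definition cone_of :: "(rat ^ 'n::finite) set \<Rightarrow> (rat ^ 'n) set" where
  "cone_of G = {(\<Sum>v\<in>G. c v *s v) | c. \<forall>v\<in>G. c v \<ge> 0}"

lemma cone_ofI: "(\<forall>v\<in>G. c v \<ge> 0) \<Longrightarrow> x = (\<Sum>v\<in>G. c v *s v) \<Longrightarrow> x \<in> cone_of G"
  unfolding cone_of_def by (rule CollectI, rule exI[of _ c]) simp

lemma cone_zero: "0 \<in> cone_of G"
  unfolding cone_of_def by (rule CollectI, rule exI[of _ "\<lambda>_. 0"]) simp

lemma cone_add: assumes "x \<in> cone_of G" "y \<in> cone_of G" shows "x + y \<in> cone_of G"
proof -
  obtain c d where c: "x = (\<Sum>v\<in>G. c v *s v)" "\<forall>v\<in>G. c v \<ge> 0"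
    and d: "y = (\<Sum>v\<in>G. d v *s v)" "\<forall>v\<in>G. d v \<ge> 0"
    using assms unfolding cone_of_def by blast
  have "x + y = (\<Sum>v\<in>G. (c v + d v) *s v)"
    by (simp add: c d vector_sadd_rdistrib sum.distrib)
  moreover have "\<forall>v\<in>G. c v + d v \<ge> 0" using c d by auto
  ultimately show ?thesis by (intro cone_ofI[of _ "\<lambda>v. c v + d v"])
qed

lemma cone_smult: assumes "x \<in> cone_of G" "t \<ge> 0" shows "t *s x \<in> cone_of G"
proof -
  obtain c where c: "x = (\<Sum>v\<in>G. c v *s v)" "\<forall>v\<in>G. c v \<ge> 0"
    using assms unfolding cone_of_def by blast
  have "t *s x = (\<Sum>v\<in>G. (t * c v) *s v)"
    by (simp add: c sum_cmul[symmetric] vector_smult_assoc)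
  moreover have "\<forall>v\<in>G. t * c v \<ge> 0" using c assms by auto
  ultimately show ?thesis by (intro cone_ofI[of _ "\<lambda>v. t * c v"])
qed

lemma cone_gen: assumes "finite G" "g \<in> G" shows "g \<in> cone_of G"
proof -
  have "g = (\<Sum>v\<in>G. if v = g then v else 0)"
    using assms by (simp add: sum.delta')
  also have "\<dots> = (\<Sum>v\<in>G. (if v = g then 1 else 0) *s v)"
    by (rule sum.cong) auto
  finally have "g = (\<Sum>v\<in>G. (if v = g then 1 else 0) *s v)" .
  moreover have "\<forall>v\<in>G. (if v = g then 1 else (0::rat)) \<ge> 0" by auto
  ultimately show ?thesis by (intro cone_ofI[of _ "\<lambda>v. if v = g then 1 else 0"])
qed

lemma cone_sum: assumes "finite I" "\<And>i. i \<in> I \<Longrightarrow> c i \<ge> 0 \<and> x i \<in> cone_of G"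
  shows "(\<Sum>i\<in>I. c i *s x i) \<in> cone_of G"
  using assms by (induct I rule: finite_induct) (auto intro: cone_add cone_smult cone_zero)

lemma cone_mono: assumes "finite G" "G \<subseteq> H" "finite H" shows "cone_of G \<subseteq> cone_of H"
proof
  fix x assume "x \<in> cone_of G"
  then obtain c where c: "x = (\<Sum>v\<in>G. c v *s v)" "\<forall>v\<in>G. c v \<ge> 0"
    unfolding cone_of_def by blast
  show "x \<in> cone_of H" unfolding c(1)
    using assms c(2) by (intro cone_sum) (auto intro: cone_gen)
qed

lemma cone_pair_nonneg: assumes "\<forall>g\<in>G. qpair a g \<ge> 0" "x \<in> cone_of G"
  shows "qpair a x \<ge> 0"
proof -
  obtain c where c: "x = (\<Sum>v\<in>G. c v *s v)" "\<forall>v\<in>G. c v \<ge> 0"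
    using assms unfolding cone_of_def by blast
  show ?thesis using assms c by (simp add: qpair_sum_r sum_nonneg)
qed

lemma farkas: "finite G \<Longrightarrow> h \<notin> cone_of G \<Longrightarrow> \<exists>a. (\<forall>g\<in>G. qpair a g \<ge> 0) \<and> qpair a h < 0"
proof (induction "card G" arbitrary: G h rule: less_induct)
  case less
  show ?case
  proof (cases "G = {}")
    case True
    then have "h \<noteq> 0" using less cone_zero by auto
    then show ?thesis using True qpair_self_pos[of h] by (intro exI[of _ "-h"]) auto
  next
    case False
    then obtain g G' where G: "G = insert g G'" "g \<notin> G'" by (meson Set.set_insert ex_in_conv)
    have fin: "finite G'" using less G by auto
    have cardlt: "card G' < card G" using G fin by auto
    have "h \<notin> cone_of G'" using less.prems cone_mono[of G' G] G fin by auto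
    then obtain a' where a': "\<forall>g\<in>G'. qpair a' g \<ge> 0" "qpair a' h < 0"
      using less.hyps[OF cardlt fin] by blast
    show ?thesis
    proof (cases "qpair a' g \<ge> 0")
      case True then show ?thesis using a' G by (intro exI[of _ a']) auto
    next
      case False
      define \<alpha> where "\<alpha> = qpair a' g"
      have \<alpha>: "\<alpha> < 0" using False \<alpha>_def by auto
      define f where "f y = \<alpha> *s y - qpair a' y *s g" for y
      define h'' where "h'' = \<alpha> *s h - qpair a' h *s g"
      have fin2: "finite (f ` G')" using fin by auto
      have card2: "card (f ` G') < card G" using card_image_le[OF fin, of f] cardlt by linarith
      have notin: "h'' \<notin> cone_of (f ` G')"
      proof
        assume "h'' \<in> cone_of (f ` G')"
        then obtain c where c: "h'' = (\<Sum>y\<in>f ` G'. c y *s y)" "\<forall>y\<in>f ` G'. c y \<ge> 0"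
          unfolding cone_of_def by blast
        define pre where "pre y = inv_into G' f y" for y
        have pre: "y \<in> f ` G' \<Longrightarrow> pre y \<in> G' \<and> f (pre y) = y" for y
          unfolding pre_def by (auto simp: inv_into_into f_inv_into_f)
        define X where "X = (\<Sum>y\<in>f ` G'. c y *s pre y)"
        define \<beta> where "\<beta> = (\<Sum>y\<in>f ` G'. c y * qpair a' (pre y))"
        have X: "X \<in> cone_of G" unfolding X_def using c pre fin G less.prems(1)
          by (intro cone_sum) (auto intro: cone_gen)
        have \<beta>: "\<beta> \<ge> 0" unfolding \<beta>_def using c pre a' by (auto intro!: sum_nonneg)
        have "h'' = (\<Sum>y\<in>f ` G'. c y *s f (pre y))" using c pre by (auto intro: sum.cong)
        also have "\<dots> = \<alpha> *s X - \<beta> *s g" unfolding f_def X_def \<beta>_def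
          by (simp add: vec_eq_iff sum_subtractf sum_distrib_left sum_distrib_right algebra_simps)
        finally have eq: "\<alpha> *s h - qpair a' h *s g = \<alpha> *s X - \<beta> *s g" unfolding h''_def .
        have hX: "h = X + ((qpair a' h - \<beta>) / \<alpha>) *s g"
        proof (subst vec_eq_iff, intro allI)
          fix i
          have "\<alpha> * h$i - qpair a' h * g$i = \<alpha> * X$i - \<beta> * g$i"
            using arg_cong[OF eq, of "\<lambda>v. v $ i"] by simp
          then show "h$i = (X + ((qpair a' h - \<beta>) / \<alpha>) *s g) $ i"
            using \<alpha> by (simp add: field_simps)
        qed
        moreover have "(qpair a' h - \<beta>) / \<alpha> \<ge> 0"
          using \<alpha> \<beta> a'(2) by (intro divide_nonpos_neg) auto
        then have "((qpair a' h - \<beta>) / \<alpha>) *s g \<in> cone_of G"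
          using G less.prems(1) by (intro cone_smult cone_gen) auto
        then have "h \<in> cone_of G" using X hX by (metis cone_add)
        then show False using less.prems(2) by blast
      qed
      obtain a'' where a'': "\<forall>y\<in>f ` G'. qpair a'' y \<ge> 0" "qpair a'' h'' < 0"
        using less.hyps[OF card2 fin2 notin] by blast
      define lam where "lam = qpair a'' g / \<alpha>"
      define a where "a = lam *s a' - a''"
      have "qpair a g = 0" unfolding a_def lam_def using \<alpha> by (simp add: \<alpha>_def)
      moreover have "qpair a y \<ge> 0" if y: "y \<in> G'" for y
      proof -
        have "qpair a y = - qpair a'' (f y) / \<alpha>" unfolding a_def lam_def f_def using \<alpha>
          by (simp add: field_simps)
        moreover have "qpair a'' (f y) \<ge> 0" using a''(1) y by auto
        ultimately show ?thesis using \<alpha> by (simp add: divide_nonneg_neg)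
      qed
      moreover have "qpair a h < 0"
      proof -
        have "qpair a h = - qpair a'' h'' / \<alpha>" unfolding a_def lam_def h''_def using \<alpha>
          by (simp add: field_simps)
        then show ?thesis using \<alpha> a''(2) by (simp add: divide_neg_neg)
      qed
      ultimately show ?thesis using G by (intro exI[of _ a]) auto
    qed
  qed
qed

lemma gordan:
  assumes fin: "finite G" and sc: "strongly_convex (cone_of G)"
  shows "\<exists>u. \<forall>v\<in>cone_of G. qpair u v \<ge> 0 \<and> (v \<noteq> 0 \<longrightarrow> qpair u v > 0)"
proof -
  define G0 where "G0 = {g\<in>G. g \<noteq> 0}"
  have "\<forall>g0\<in>G0. \<exists>a. (\<forall>g\<in>G. qpair a g \<ge> 0) \<and> qpair a (- g0) < 0"
  proof
    fix g0 assume g0: "g0 \<in> G0"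
    have "- g0 \<notin> cone_of G"
    proof
      assume "- g0 \<in> cone_of G"
      then have "g0 \<in> uminus ` cone_of G" by (metis image_eqI minus_minus)
      moreover have "g0 \<in> cone_of G" using g0 fin by (auto simp: G0_def intro: cone_gen)
      ultimately have "g0 = 0" using sc unfolding strongly_convex_def by blast
      then show False using g0 by (auto simp: G0_def)
    qed
    then show "\<exists>a. (\<forall>g\<in>G. qpair a g \<ge> 0) \<and> qpair a (- g0) < 0"
      using farkas[OF fin] by blast
  qed
  then obtain A where A: "\<And>g0. g0 \<in> G0 \<Longrightarrow> (\<forall>g\<in>G. qpair (A g0) g \<ge> 0) \<and> qpair (A g0) (- g0) < 0"
    by metis
  define u where "u = (\<Sum>g0\<in>G0. A g0)"
  have finG0: "finite G0" using fin by (auto simp: G0_def)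
  have ug: "qpair u g \<ge> 0" if "g \<in> G" for g
    unfolding u_def qpair_sum_l using A that by (auto intro!: sum_nonneg)
  have ug0: "qpair u g > 0" if "g \<in> G0" for g
  proof -
    have "qpair (A g) g \<le> (\<Sum>g0\<in>G0. qpair (A g0) g)"
      using that A finG0 G0_def by (intro member_le_sum) auto
    then show ?thesis using A[OF that] unfolding u_def qpair_sum_l by simp
  qed
  have "qpair u v \<ge> 0 \<and> (v \<noteq> 0 \<longrightarrow> qpair u v > 0)" if v: "v \<in> cone_of G" for v
  proof -
    obtain c where c: "v = (\<Sum>g\<in>G. c g *s g)" "\<forall>g\<in>G. c g \<ge> 0"
      using v unfolding cone_of_def by blast
    have eq: "qpair u v = (\<Sum>g\<in>G. c g * qpair u g)" using c by (simp add: qpair_sum_r)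
    have nn: "\<forall>g\<in>G. c g * qpair u g \<ge> 0" using c ug by auto
    have "v = 0" if z: "qpair u v = 0"
    proof -
      have z2: "\<forall>g\<in>G. c g * qpair u g = 0"
        using sum_nonneg_eq_0_iff[OF fin, of "\<lambda>g. c g * qpair u g"] nn z eq by auto
      have "\<forall>g\<in>G. c g *s g = 0"
      proof
        fix g assume g: "g \<in> G"
        show "c g *s g = 0"
        proof (cases "g = 0")
          case False
          then have "qpair u g > 0" using ug0 g unfolding G0_def by auto
          then show ?thesis using z2 g by auto
        qed simp
      qed
      then show ?thesis unfolding c(1) by (rule sum.neutral)
    qed
    moreover have "qpair u v \<ge> 0" using eq nn by (simp add: sum_nonneg)
    ultimately show ?thesis by (auto simp: order_le_less)
  qed
  then show ?thesis by blast
qed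

lemma int_scale: "\<exists>d::int. d > 0 \<and> (\<exists>m. ratv m = of_int d *s (a::rat^'n::finite))"
proof -
  define q where "q i = snd (quotient_of (a$i))" for i
  define p where "p i = fst (quotient_of (a$i))" for i
  have qpos: "q i > 0" for i unfolding q_def using quotient_of_denom_pos' by blast
  have aq: "a$i = of_int (p i) / of_int (q i)" for i
    unfolding p_def q_def by (rule quotient_of_div) simp
  define d where "d = (\<Prod>i\<in>UNIV. q i)"
  define m where "m = (\<chi> i. (\<Prod>j\<in>UNIV-{i}. q j) * p i)"
  have "d > 0" unfolding d_def using qpos by (simp add: prod_pos)
  moreover have "ratv m = of_int d *s a"
  proof (subst vec_eq_iff, intro allI)
    fix i
    have d: "d = q i * (\<Prod>j\<in>UNIV-{i}. q j)" unfolding d_def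
      by (simp add: prod.remove[of UNIV i])
    show "ratv m $ i = (of_int d *s a) $ i"
      unfolding ratv_def m_def d using qpos[of i] by (simp add: aq field_simps)
  qed
  ultimately show ?thesis by blast
qed

lemma dual_cone_iff:
  assumes "finite G"
  shows "m \<in> dual_lattice (cone_of G) \<longleftrightarrow> (\<forall>g\<in>G. qpair (ratv m) g \<ge> 0)"
  using assms unfolding dual_lattice_def by (auto intro: cone_gen cone_pair_nonneg)

lemma farkas_int:
  assumes "finite G" "h \<notin> cone_of G"
  shows "\<exists>m\<in>dual_lattice (cone_of G). qpair (ratv m) h < 0"
proof -
  obtain a where a: "\<forall>g\<in>G. qpair a g \<ge> 0" "qpair a h < 0" using farkas[OF assms] by blast
  obtain d m where dm: "d > 0" "ratv m = of_int d *s a" using int_scale[of a] by blast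
  have "m \<in> dual_lattice (cone_of G)" unfolding dual_cone_iff[OF assms(1)] dm(2)
    using a dm(1) by simp
  moreover have "qpair (ratv m) h < 0" unfolding dm(2) using a dm(1) by (simp add: mult_pos_neg)
  ultimately show ?thesis by blast
qed

lemma dual_generates:
  assumes fin: "finite G" and sc: "strongly_convex (cone_of G)"
  shows "\<exists>p\<in>dual_lattice (cone_of G). p - m \<in> dual_lattice (cone_of G)"
proof -
  obtain u where u: "\<forall>v\<in>cone_of G. qpair u v \<ge> 0 \<and> (v \<noteq> 0 \<longrightarrow> qpair u v > 0)"
    using gordan[OF fin sc] by blast
  obtain d m1 where dm: "d > 0" "ratv m1 = of_int d *s u" using int_scale[of u] by blast
  have m1: "g \<in> G \<Longrightarrow> g \<noteq> 0 \<Longrightarrow> qpair (ratv m1) g > 0" for g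
    using u dm fin by (auto intro: cone_gen)
  have "\<forall>g\<in>G. eventually (\<lambda>N. 0 \<le> qpair (ratv m) g + of_nat N * qpair (ratv m1) g) sequentially"
  proof
    fix g assume g: "g \<in> G"
    show "eventually (\<lambda>N. 0 \<le> qpair (ratv m) g + of_nat N * qpair (ratv m1) g) sequentially"
    proof (cases "g = 0")
      case True then show ?thesis by simp
    next
      case False
      then have pos: "qpair (ratv m1) g > 0" using m1 g by auto
      obtain n where n: "- qpair (ratv m) g < of_nat n * qpair (ratv m1) g"
        using ex_less_of_nat_mult[OF pos] by blast
      show ?thesis
      proof (rule eventually_sequentiallyI[of n])
        fix N assume "n \<le> N"
        then have "of_nat n * qpair (ratv m1) g \<le> of_nat N * qpair (ratv m1) g"
          using pos by (intro mult_right_mono) auto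
        then show "0 \<le> qpair (ratv m) g + of_nat N * qpair (ratv m1) g" using n by linarith
      qed
    qed
  qed
  then have "eventually (\<lambda>N. \<forall>g\<in>G. 0 \<le> qpair (ratv m) g + of_nat N * qpair (ratv m1) g) sequentially"
    by (rule eventually_ball_finite[OF fin])
  then obtain N where N: "\<forall>g\<in>G. 0 \<le> qpair (ratv m) g + of_nat N * qpair (ratv m1) g"
    by (auto simp: eventually_sequentially)
  define p where "p = m + int N *s m1"
  have m1nn: "\<forall>g\<in>G. 0 \<le> qpair (ratv m1) g" using m1 by (metis order_le_less qpair_zero_r)
  have "p \<in> dual_lattice (cone_of G)" unfolding dual_cone_iff[OF fin] p_def using N by simp
  moreover have "p - m \<in> dual_lattice (cone_of G)" unfolding dual_cone_iff[OF fin] p_def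
    using m1nn by simp
  ultimately show ?thesis by blast
qed

lemma additive_ext:
  fixes S :: "(int ^ 'n::finite) set" and \<nu> :: "int ^ 'n \<Rightarrow> int"
  assumes Sadd: "\<And>a b. a \<in> S \<Longrightarrow> b \<in> S \<Longrightarrow> a + b \<in> S"
    and S0: "0 \<in> S"
    and add: "\<And>a b. a \<in> S \<Longrightarrow> b \<in> S \<Longrightarrow> \<nu> (a + b) = \<nu> a + \<nu> b"
    and gen: "\<And>m. \<exists>p\<in>S. p - m \<in> S"
  shows "\<exists>w. \<forall>m\<in>S. \<nu> m = ipair m w"
proof -
  define P where "P m = (SOME p. p \<in> S \<and> p - m \<in> S)" for m
  have P: "P m \<in> S \<and> P m - m \<in> S" for m
    unfolding P_def using gen[of m] by (metis (mono_tags, lifting) someI_ex)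
  define \<mu> where "\<mu> m = \<nu> (P m) - \<nu> (P m - m)" for m
  have wd: "\<nu> p - \<nu> q = \<nu> p' - \<nu> q'" if "p \<in> S" "q \<in> S" "p' \<in> S" "q' \<in> S" "p - q = p' - q'"
    for p q p' q'
  proof -
    have "p + q' = (p - q) + (q + q')" by (simp add: algebra_simps)
    also have "\<dots> = (p' - q') + (q + q')" using that(5) by simp
    also have "\<dots> = p' + q" by (simp add: algebra_simps)
    finally have "p + q' = p' + q" .
    then have "\<nu> (p + q') = \<nu> (p' + q)" by simp
    then show ?thesis using add that by simp
  qed
  have key: "\<mu> (p - q) = \<nu> p - \<nu> q" if "p \<in> S" "q \<in> S" for p q
    unfolding \<mu>_def using P[of "p - q"] that by (intro wd) (auto simp: algebra_simps)
  have \<nu>0: "\<nu> 0 = 0" using add[OF S0 S0] by simp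
  have \<mu>S: "\<mu> m = \<nu> m" if "m \<in> S" for m using key[OF that S0] \<nu>0 by simp
  have \<mu>add: "\<mu> (x + y) = \<mu> x + \<mu> y" for x y
  proof -
    have "x + y = (P x + P y) - ((P x - x) + (P y - y))" by (simp add: algebra_simps)
    then have "\<mu> (x + y) = \<nu> (P x + P y) - \<nu> ((P x - x) + (P y - y))"
      using key[of "P x + P y" "(P x - x) + (P y - y)"] P Sadd by metis
    also have "\<dots> = \<mu> x + \<mu> y" unfolding \<mu>_def using P add by simp
    finally show ?thesis .
  qed
  have \<mu>0: "\<mu> 0 = 0" using \<mu>S[OF S0] \<nu>0 by simp
  have \<mu>neg: "\<mu> (- x) = - \<mu> x" for x using \<mu>add[of x "- x"] \<mu>0 by simp
  have \<mu>nat: "\<mu> (int k *s x) = int k * \<mu> x" for k x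
  proof (induct k)
    case 0 then show ?case using \<mu>0 by simp
  next
    case (Suc k)
    have "int (Suc k) *s x = x + int k *s x" by (simp add: vector_sadd_rdistrib)
    then show ?case using Suc \<mu>add by (simp add: algebra_simps)
  qed
  have \<mu>int: "\<mu> (k *s x) = k * \<mu> x" for k x
  proof (cases "k \<ge> 0")
    case True then show ?thesis using \<mu>nat[of "nat k" x] by simp
  next
    case False
    then have "k *s x = - (int (nat (- k)) *s x)" by (simp add: vector_smult_lneg[symmetric])
    then show ?thesis using \<mu>nat[of "nat (-k)" x] \<mu>neg False by simp
  qed
  have \<mu>sum: "\<mu> (\<Sum>i\<in>A. f i) = (\<Sum>i\<in>A. \<mu> (f i))" if "finite A" for A and f :: "'b \<Rightarrow> int^'n"
    using that by (induct A rule: finite_induct) (auto simp: \<mu>0 \<mu>add)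
  define w where "w = (\<chi> i. \<mu> (axis i 1))"
  have "\<mu> m = ipair m w" for m
  proof -
    have "\<mu> m = \<mu> (\<Sum>i\<in>UNIV. (m$i) *s axis i 1)" by (simp add: basis_expansion)
    also have "\<dots> = (\<Sum>i\<in>UNIV. m$i * \<mu> (axis i 1))" by (simp add: \<mu>sum \<mu>int)
    finally show ?thesis unfolding ipair_def w_def by simp
  qed
  then show ?thesis using \<mu>S by metis
qed



lemma alg_add: "f \<in> semigroup_alg S \<Longrightarrow> g \<in> semigroup_alg S \<Longrightarrow> f + g \<in> semigroup_alg S"
  unfolding semigroup_alg_def using keys_add[of f g] by auto
lemma alg_zero: "0 \<in> semigroup_alg S" unfolding semigroup_alg_def by simp
lemma alg_single: "m \<in> S \<Longrightarrow> Poly_Mapping.single m c \<in> semigroup_alg S"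
  unfolding semigroup_alg_def by simp
lemma alg_sum: "(\<And>x. x \<in> A \<Longrightarrow> f x \<in> semigroup_alg S) \<Longrightarrow> sum f A \<in> semigroup_alg S"
  by (induct A rule: infinite_finite_induct) (auto intro: alg_add alg_zero)

lemma single_eq0: "Poly_Mapping.single k v = 0 \<longleftrightarrow> v = 0"
  by (metis lookup_single_eq single_zero lookup_zero)

lemma pm_expand: "f = (\<Sum>m\<in>Poly_Mapping.keys f. Poly_Mapping.single m (Poly_Mapping.lookup f m))"
proof (rule poly_mapping_eqI)
  fix k
  have "Poly_Mapping.lookup (\<Sum>m\<in>Poly_Mapping.keys f. Poly_Mapping.single m (Poly_Mapping.lookup f m)) k
     = (\<Sum>m\<in>Poly_Mapping.keys f. if m = k then Poly_Mapping.lookup f m else 0)"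
    by (simp add: lookup_sum lookup_single when_def)
  also have "\<dots> = Poly_Mapping.lookup f k"
    by (simp add: sum.delta' in_keys_iff)
  finally show "Poly_Mapping.lookup f k = Poly_Mapping.lookup (\<Sum>m\<in>Poly_Mapping.keys f. Poly_Mapping.single m (Poly_Mapping.lookup f m)) k"
    by simp
qed

definition X :: "int ^ 'n::finite \<Rightarrow> ((int ^ 'n) \<Rightarrow>\<^sub>0 'k::field)" where
  "X m = Poly_Mapping.single m 1"

lemma X_ne: "X m \<noteq> 0"
  unfolding X_def by (metis keys_single one_neq_zero singletonI emptyE keys_zero)

context
  fixes S :: "(int ^ 'n::finite) set"
    and D :: "nat \<Rightarrow> ((int ^ 'n) \<Rightarrow>\<^sub>0 'k::field) \<Rightarrow> ((int ^ 'n) \<Rightarrow>\<^sub>0 'k)"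
    and e :: "int ^ 'n"
  assumes L: "lfihd S D" and H: "homogeneous_lfihd S D e"
    and Sadd: "\<forall>a\<in>S. \<forall>b\<in>S. a + b \<in> S"
begin

lemma D_closed: "f \<in> semigroup_alg S \<Longrightarrow> D i f \<in> semigroup_alg S"
  using L unfolding lfihd_def by blast
lemma D_add: "f \<in> semigroup_alg S \<Longrightarrow> g \<in> semigroup_alg S \<Longrightarrow> D i (f + g) = D i f + D i g"
  using L unfolding lfihd_def by blast
lemma D_smul: "f \<in> semigroup_alg S \<Longrightarrow> D i (Poly_Mapping.single 0 c * f) = Poly_Mapping.single 0 c * D i f"
  using L unfolding lfihd_def by blast
lemma D_0: "f \<in> semigroup_alg S \<Longrightarrow> D 0 f = f"
  using L unfolding lfihd_def by blast
lemma D_leib: "f \<in> semigroup_alg S \<Longrightarrow> g \<in> semigroup_alg S \<Longrightarrow> D i (f * g) = (\<Sum>j\<le>i. D j f * D (i - j) g)"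
  using L unfolding lfihd_def by blast
lemma D_lf: "f \<in> semigroup_alg S \<Longrightarrow> \<exists>r. \<forall>i\<ge>r. D i f = 0"
  using L unfolding lfihd_def by blast
lemma D_iter: "f \<in> semigroup_alg S \<Longrightarrow> D i (D j f) = of_nat ((i + j) choose i) * D (i + j) f"
  using L unfolding lfihd_def by blast

lemma X_alg: "m \<in> S \<Longrightarrow> X m \<in> semigroup_alg S"
  unfolding X_def by (rule alg_single)

definition coef :: "nat \<Rightarrow> int ^ 'n \<Rightarrow> 'k" where
  "coef i m = Poly_Mapping.lookup (D i (X m)) (m + int i *s e)"

lemma D_X: "m \<in> S \<Longrightarrow> D i (X m) = Poly_Mapping.single (m + int i *s e) (coef i m)"
proof -
  assume m: "m \<in> S"
  obtain c where c: "D i (X m) = Poly_Mapping.single (m + int i *s e) c"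
    using H m unfolding homogeneous_lfihd_def X_def by blast
  then show ?thesis unfolding coef_def by simp
qed

lemma D_X_ne: "m \<in> S \<Longrightarrow> D i (X m) \<noteq> 0 \<longleftrightarrow> coef i m \<noteq> 0"
  using D_X by (simp add: single_eq0)

definition deg :: "int ^ 'n \<Rightarrow> nat" where
  "deg m = (GREATEST i. D i (X m) \<noteq> 0)"

lemma deg: assumes m: "m \<in> S"
  shows "D (deg m) (X m) \<noteq> 0" "\<And>i. i > deg m \<Longrightarrow> D i (X m) = 0"
proof -
  obtain r where r: "\<forall>i\<ge>r. D i (X m) = 0" using D_lf[OF X_alg[OF m]] by blast
  have P0: "D 0 (X m) \<noteq> 0" using D_0[OF X_alg[OF m]] X_ne by simp
  have bnd: "y \<le> r" if "D y (X m) \<noteq> 0" for y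
  proof (rule ccontr)
    assume "\<not> y \<le> r"
    then have "y \<ge> r" by simp
    then show False using r that by blast
  qed
  show "D (deg m) (X m) \<noteq> 0" unfolding deg_def
    by (rule GreatestI_nat[where P="\<lambda>i. D i (X m) \<noteq> 0", OF P0 bnd])
  show "D i (X m) = 0" if "i > deg m" for i
  proof (rule ccontr)
    assume "D i (X m) \<noteq> 0"
    then have "i \<le> deg m" unfolding deg_def
      by (rule Greatest_le_nat[where P="\<lambda>i. D i (X m) \<noteq> 0", OF _ bnd])
    then show False using that by simp
  qed
qed

lemma deg_eqI: assumes "m \<in> S" "D d (X m) \<noteq> 0" "\<And>i. i > d \<Longrightarrow> D i (X m) = 0"
  shows "deg m = d"
proof (rule ccontr)
  assume ne: "deg m \<noteq> d"
  show False
  proof (cases "deg m < d")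
    case True then show False using deg(2)[OF assms(1) True] assms(2) by simp
  next
    case False then have "deg m > d" using ne by simp
    then show False using assms(3) deg(1)[OF assms(1)] by simp
  qed
qed

lemma deg0_iff: assumes m: "m \<in> S" shows "deg m = 0 \<longleftrightarrow> (\<forall>i>0. D i (X m) = 0)"
proof
  assume "deg m = 0" then show "\<forall>i>0. D i (X m) = 0" using deg(2)[OF m] by simp
next
  assume a: "\<forall>i>0. D i (X m) = 0"
  show "deg m = 0"
  proof (rule ccontr)
    assume "deg m \<noteq> 0"
    then show False using a deg(1)[OF m] by simp
  qed
qed

lemma X_mult: "X a * X b = (X (a + b) :: (int ^ 'n) \<Rightarrow>\<^sub>0 'k)"
  unfolding X_def by (simp add: mult_single)

lemma deg_add: assumes m: "m \<in> S" and m': "m' \<in> S"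
  shows "deg (m + m') = deg m + deg m'"
proof -
  define a where "a = deg m"
  define b where "b = deg m'"
  have lb: "D i (X (m + m')) = (\<Sum>j\<le>i. D j (X m) * D (i - j) (X m'))" for i
    using D_leib[OF X_alg[OF m] X_alg[OF m'], of i] by (simp add: X_mult)
  have hi: "D i (X (m + m')) = 0" if "i > a + b" for i
    unfolding lb
  proof (rule sum.neutral, intro ballI)
    fix j assume "j \<in> {..i}"
    show "D j (X m) * D (i - j) (X m') = 0"
    proof (cases "j > a")
      case True then show ?thesis using deg(2)[OF m] a_def by simp
    next
      case False then have "i - j > b" using that by auto
      then show ?thesis using deg(2)[OF m'] b_def by simp
    qed
  qed
  have "D (a + b) (X (m + m')) = (\<Sum>j\<le>a+b. if j = a then D a (X m) * D b (X m') else 0)"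
    unfolding lb
  proof (rule sum.cong)
    fix j assume "j \<in> {..a+b}"
    show "D j (X m) * D (a + b - j) (X m') = (if j = a then D a (X m) * D b (X m') else 0)"
    proof (cases "j = a")
      case False
      show ?thesis
      proof (cases "j > a")
        case True then show ?thesis using deg(2)[OF m] a_def by simp
      next
        case False2: False
        then have "a + b - j > b" using False by auto
        then show ?thesis using deg(2)[OF m'] b_def False by simp
      qed
    qed simp
  qed simp
  also have "\<dots> = D a (X m) * D b (X m')" by simp
  also have "\<dots> = Poly_Mapping.single (m + int a *s e + (m' + int b *s e)) (coef a m * coef b m')"
    using D_X[OF m] D_X[OF m'] by (simp add: mult_single)
  finally have eq: "D (a + b) (X (m + m')) = Poly_Mapping.single (m + int a *s e + (m' + int b *s e)) (coef a m * coef b m')" .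
  have "coef a m \<noteq> 0" "coef b m' \<noteq> 0" using deg(1)[OF m] deg(1)[OF m'] D_X_ne m m' a_def b_def by auto
  then have "D (a + b) (X (m + m')) \<noteq> 0" unfolding eq
    by (simp add: single_eq0)
  then show ?thesis using deg_eqI[OF Sadd[rule_format, OF m m'] _ hi] a_def b_def by simp
qed


lemma D_single: assumes m: "m \<in> S"
  shows "D i (Poly_Mapping.single m c) = Poly_Mapping.single (m + int i *s e) (c * coef i m)"
proof -
  have "Poly_Mapping.single m c = Poly_Mapping.single 0 c * X m" unfolding X_def by (simp add: mult_single)
  then have "D i (Poly_Mapping.single m c) = Poly_Mapping.single 0 c * D i (X m)"
    using D_smul[OF X_alg[OF m]] by simp
  also have "\<dots> = Poly_Mapping.single (m + int i *s e) (c * coef i m)"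
    using D_X[OF m] by (simp add: mult_single)
  finally show ?thesis .
qed

lemma D_sum: assumes "finite A" "A \<subseteq> S"
  shows "D i (\<Sum>m\<in>A. Poly_Mapping.single m (c m)) = (\<Sum>m\<in>A. Poly_Mapping.single (m + int i *s e) (c m * coef i m))"
  using assms
proof (induct A rule: finite_induct)
  case empty
  have "D i 0 = D i (0 + 0)" by simp
  also have "\<dots> = D i 0 + D i 0" by (rule D_add[OF alg_zero alg_zero])
  finally show ?case by simp
next
  case (insert x F)
  have "D i (\<Sum>m\<in>insert x F. Poly_Mapping.single m (c m))
      = D i (Poly_Mapping.single x (c x) + (\<Sum>m\<in>F. Poly_Mapping.single m (c m)))"
    using insert by simp
  also have "\<dots> = D i (Poly_Mapping.single x (c x)) + D i (\<Sum>m\<in>F. Poly_Mapping.single m (c m))"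
    using insert by (intro D_add alg_single alg_sum) auto
  finally show ?case using insert D_single by simp
qed

lemma ker_char: assumes f: "f \<in> semigroup_alg S"
  shows "(\<forall>i>0. D i f = 0) \<longleftrightarrow> (\<forall>m\<in>Poly_Mapping.keys f. deg m = 0)"
proof -
  have kS: "Poly_Mapping.keys f \<subseteq> S" using f unfolding semigroup_alg_def by simp
  have Df: "D i f = (\<Sum>m\<in>Poly_Mapping.keys f. Poly_Mapping.single (m + int i *s e) (Poly_Mapping.lookup f m * coef i m))" for i
    by (subst pm_expand[of f], rule D_sum[OF finite_keys kS])
  show ?thesis
  proof
    assume a: "\<forall>i>0. D i f = 0"
    show "\<forall>m\<in>Poly_Mapping.keys f. deg m = 0"
    proof (rule ballI, rule ccontr)
      fix m0 assume m0: "m0 \<in> Poly_Mapping.keys f" and nz: "deg m0 \<noteq> 0"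
      define i where "i = deg m0"
      have "coef i m0 \<noteq> 0" using deg(1)[of m0] D_X_ne[of m0] m0 kS i_def by auto
      have "Poly_Mapping.lookup (D i f) (m0 + int i *s e)
          = (\<Sum>m\<in>Poly_Mapping.keys f. if m = m0 then Poly_Mapping.lookup f m * coef i m else 0)"
        unfolding Df lookup_sum by (intro sum.cong) (auto simp: lookup_single when_def)
      also have "\<dots> = Poly_Mapping.lookup f m0 * coef i m0" using m0 by (simp add: sum.delta')
      also have "\<dots> \<noteq> 0" using m0 \<open>coef i m0 \<noteq> 0\<close> by (simp add: in_keys_iff)
      finally have "D i f \<noteq> 0" by auto
      then show False using a nz i_def by auto
    qed
  next
    assume a: "\<forall>m\<in>Poly_Mapping.keys f. deg m = 0"
    show "\<forall>i>0. D i f = 0"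
    proof (intro allI impI)
      fix i :: nat assume i: "i > 0"
      have "coef i m = 0" if "m \<in> Poly_Mapping.keys f" for m
        using a that kS deg0_iff[of m] D_X_ne[of m i] i by auto
      then show "D i f = 0" unfolding Df by (intro sum.neutral) auto
    qed
  qed
qed

lemma shift: assumes m: "m \<in> S"
  shows "m + int (deg m) *s e \<in> S \<and> deg (m + int (deg m) *s e) = 0"
proof -
  define d where "d = deg m"
  define c where "c = coef d m"
  have c: "c \<noteq> 0" using deg(1)[OF m] D_X_ne[OF m] c_def d_def by auto
  have y: "D d (X m) = Poly_Mapping.single (m + int d *s e) c" using D_X[OF m] c_def by simp
  have "D d (X m) \<in> semigroup_alg S" by (rule D_closed[OF X_alg[OF m]])
  then have mS: "m + int d *s e \<in> S" unfolding y semigroup_alg_def using c by simp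
  have Dy: "D i (D d (X m)) = 0" if "i > 0" for i
    using D_iter[OF X_alg[OF m], of i d] deg(2)[OF m, of "i + d"] that d_def by simp
  have Xeq: "X (m + int d *s e) = Poly_Mapping.single 0 (1 / c) * D d (X m)"
    unfolding y using c by (simp add: X_def mult_single)
  have "D i (X (m + int d *s e)) = 0" if "i > 0" for i
    unfolding Xeq using D_smul[OF D_closed[OF X_alg[OF m]]] Dy[OF that] by simp
  then show ?thesis using mS deg0_iff[OF mS] d_def by simp
qed

end


lemma dual_add: "a \<in> dual_lattice \<sigma> \<Longrightarrow> b \<in> dual_lattice \<sigma> \<Longrightarrow> a + b \<in> dual_lattice \<sigma>"
  unfolding dual_lattice_def by (auto intro: add_nonneg_nonneg)
lemma dual_zero: "0 \<in> dual_lattice \<sigma>"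
  unfolding dual_lattice_def by simp

theorem lemma5p4p3:
  fixes \<sigma> :: "(rat ^ 'n::finite) set"
    and D :: "nat \<Rightarrow> ((int ^ 'n) \<Rightarrow>\<^sub>0 'k::field) \<Rightarrow> ((int ^ 'n) \<Rightarrow>\<^sub>0 'k)"
    and e :: "int ^ 'n"
  assumes "polyhedral_cone \<sigma>" and "strongly_convex \<sigma>" and "\<sigma> \<noteq> {0}"
    and "lfihd (dual_lattice \<sigma>) D"
    and "lfihd_kernel (dual_lattice \<sigma>) D \<noteq> semigroup_alg (dual_lattice \<sigma>)"
    and "homogeneous_lfihd (dual_lattice \<sigma>) D e"
  shows "\<exists>\<rho>. is_ray \<sigma> \<rho> \<and>
           lfihd_kernel (dual_lattice \<sigma>) D = semigroup_alg (rho_star \<sigma> \<rho>) \<and>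
           demazure_root_with \<sigma> e \<rho>"
proof -
  obtain G where fin: "finite G" and \<sigma>G: "\<sigma> = cone_of G"
    using assms(1) unfolding polyhedral_cone_def cone_of_def by blast
  define S where "S = dual_lattice \<sigma>"
  have sc: "strongly_convex (cone_of G)" using assms(2) \<sigma>G by simp
  note L = assms(4)[folded S_def] and H = assms(6)[folded S_def]
  have Sadd: "\<And>a b. a \<in> S \<Longrightarrow> b \<in> S \<Longrightarrow> a + b \<in> S" unfolding S_def by (rule dual_add)
  have SaddB: "\<forall>a\<in>S. \<forall>b\<in>S. a + b \<in> S" using Sadd by blast
  note degs = deg[OF L H SaddB] and deg_add' = deg_add[OF L H SaddB]
    and ker' = ker_char[OF L H SaddB] and shift' = shift[OF L H SaddB]
  have degadd: "deg D (a+b) = deg D a + deg D b" if "a\<in>S" "b\<in>S" for a b using deg_add'[OF that] .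
  obtain w where w: "\<forall>m\<in>S. int (deg D m) = ipair m w"
  proof -
    have gen: "\<And>m. \<exists>p\<in>S. p - m \<in> S" using dual_generates[OF fin sc] \<sigma>G S_def by simp
    have S0: "0 \<in> S" unfolding S_def by (rule dual_zero)
    have "\<exists>w. \<forall>m\<in>S. int (deg D m) = ipair m w"
    proof (rule additive_ext[where \<nu>="\<lambda>m. int (deg D m)", OF Sadd S0 _ gen])
      fix a b assume ab: "a \<in> S" "b \<in> S"
      show "int (deg D (a + b)) = int (deg D a) + int (deg D b)" using degadd[OF ab] by simp
    qed
    then show ?thesis using that by blast
  qed
  have wS: "\<And>m. m \<in> S \<Longrightarrow> qpair (ratv m) (ratv w) = of_nat (deg D m)"
    using w by (metis ipair_qpair of_int_of_nat_eq)
  obtain f where f: "f \<in> semigroup_alg S" "\<not> (\<forall>i>0. D i f = 0)"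
    using assms(5) unfolding lfihd_kernel_def S_def by blast
  then obtain m0 where m0: "m0 \<in> Poly_Mapping.keys f" "deg D m0 \<noteq> 0" using ker'[OF f(1)] by blast
  have m0S: "m0 \<in> S" using f(1) m0(1) unfolding semigroup_alg_def by blast
  have ew: "ipair e w = -1"
  proof -
    define d where "d = deg D m0"
    have "m0 + int d *s e \<in> S" "deg D (m0 + int d *s e) = 0" using shift'[OF m0S] d_def by auto
    then have "ipair (m0 + int d *s e) w = 0" using w by force
    then have "int d + int d * ipair e w = 0" using w m0S d_def by simp
    then have "int d * (1 + ipair e w) = 0" by (simp add: algebra_simps)
    then show ?thesis using m0(2) d_def by simp
  qed
  have w0: "w \<noteq> 0" using ew by (auto simp: ipair_def)
  have qew: "qpair (ratv e) (ratv w) = -1" using ew ipair_qpair[of e w] by simp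
  have dualS: "h \<in> \<sigma>" if "\<forall>m\<in>S. qpair (ratv m) h \<ge> 0" for h
  proof (rule ccontr)
    assume "h \<notin> \<sigma>"
    then obtain m where "m \<in> S" "qpair (ratv m) h < 0"
      using farkas_int[OF fin] \<sigma>G S_def by auto
    then show False using that by force
  qed
  have Sdef: "qpair (ratv m) v \<ge> 0" if "m \<in> S" "v \<in> \<sigma>" for m v
    using that unfolding S_def dual_lattice_def by blast
  have wsig: "ratv w \<in> \<sigma>" by (rule dualS) (simp add: wS)
  define \<pi> where "\<pi> v = v + qpair (ratv e) v *s ratv w" for v
  have pisig: "\<pi> v \<in> \<sigma>" if v: "v \<in> \<sigma>" for v
  proof (rule dualS, intro ballI)
    fix m assume m: "m \<in> S"
    have "qpair (ratv m) (\<pi> v) = qpair (ratv (m + int (deg D m) *s e)) v"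
      unfolding \<pi>_def using wS[OF m] by (simp add: algebra_simps)
    moreover have "0 \<le> qpair (ratv (m + int (deg D m) *s e)) v"
      using Sdef[OF conjunct1[OF shift'[OF m]] v] .
    ultimately show "qpair (ratv m) (\<pi> v) \<ge> 0" by simp
  qed
  have sig_add: "a + b \<in> \<sigma>" if "a \<in> \<sigma>" "b \<in> \<sigma>" for a b using that \<sigma>G cone_add by blast
  have sig_smult: "t *s a \<in> \<sigma>" if "a \<in> \<sigma>" "t \<ge> 0" for a t using that \<sigma>G cone_smult by blast
  obtain u0 where u0: "\<forall>v\<in>\<sigma>. qpair u0 v \<ge> 0 \<and> (v \<noteq> 0 \<longrightarrow> qpair u0 v > 0)"
    using gordan[OF fin sc] \<sigma>G by auto
  define u where "u = u0 + qpair u0 (ratv w) *s ratv e"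
  have upi: "qpair u v = qpair u0 (\<pi> v)" for v unfolding u_def \<pi>_def by (simp add: algebra_simps)
  have prim: "primitive w"
    unfolding primitive_def
  proof (intro conjI w0 allI impI)
    fix w' and k :: int assume "w = k *s w'"
    then have "k * ipair e w' = -1" using ew by simp
    then have h: "k * (- ipair e w') = 1" by simp
    show "\<bar>k\<bar> = 1" using zmult_eq_1_iff[of k "- ipair e w'"] h by auto
  qed
  have zero_set: "{v\<in>\<sigma>. qpair u v = 0} = {t *s ratv w | t. t \<ge> 0}"
  proof (intro set_eqI iffI)
    fix v assume "v \<in> {v\<in>\<sigma>. qpair u v = 0}"
    then have v: "v \<in> \<sigma>" "qpair u0 (\<pi> v) = 0" using upi by auto
    then have "\<pi> v = 0" using u0 pisig[OF v(1)] by force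
    then have veq: "v = (- qpair (ratv e) v) *s ratv w" unfolding \<pi>_def
      by (simp add: vector_smult_lneg eq_neg_iff_add_eq_0)
    define t where "t = - qpair (ratv e) v"
    have "t \<ge> 0"
    proof (rule ccontr)
      assume "\<not> t \<ge> 0"
      then have t: "t < 0" by simp
      have inS: "(- (1 / t)) *s v \<in> \<sigma>" using sig_smult[OF v(1)] t by simp
      have vt: "v = t *s ratv w" using veq t_def by simp
      have "(- (1 / t)) *s v = (- (1 / t) * t) *s ratv w" unfolding vt by (simp only: vector_smult_assoc)
      also have "\<dots> = (-1) *s ratv w" using t by simp
      also have "\<dots> = - ratv w" by (simp add: vector_sneg_minus1[symmetric])
      finally have "(- (1 / t)) *s v = - ratv w" .
      then have "ratv w \<in> uminus ` \<sigma>" using inS by (metis image_eqI minus_minus)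
      then have "ratv w \<in> \<sigma> \<inter> uminus ` \<sigma>" using wsig by simp
      then have "ratv w = 0" using assms(2) unfolding strongly_convex_def by simp
      then show False using qew by simp
    qed
    then show "v \<in> {t *s ratv w | t. t \<ge> 0}" using veq t_def by blast
  next
    fix v assume "v \<in> {t *s ratv w | t. t \<ge> 0}"
    then obtain t where t: "v = t *s ratv w" "t \<ge> 0" by blast
    have "\<pi> v = 0" unfolding \<pi>_def t(1) using qew by (simp add: vector_smult_assoc vector_smult_lneg)
    then show "v \<in> {v\<in>\<sigma>. qpair u v = 0}" using upi sig_smult[OF wsig t(2)] t(1) by simp
  qed
  have uge: "\<forall>v\<in>\<sigma>. qpair u v \<ge> 0" using upi u0 pisig by simp
  have ray: "is_ray \<sigma> w" unfolding is_ray_def using prim uge zero_set by blast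
  have ker: "lfihd_kernel (dual_lattice \<sigma>) D = semigroup_alg (rho_star \<sigma> w)"
  proof (intro set_eqI iffI)
    fix p assume "p \<in> lfihd_kernel (dual_lattice \<sigma>) D"
    then have p: "p \<in> semigroup_alg S" "\<forall>i>0. D i p = 0" unfolding lfihd_kernel_def S_def by auto
    then have kS: "Poly_Mapping.keys p \<subseteq> S" unfolding semigroup_alg_def by simp
    have "\<forall>m\<in>Poly_Mapping.keys p. deg D m = 0" using ker'[OF p(1)] p(2) by blast
    then show "p \<in> semigroup_alg (rho_star \<sigma> w)" using kS w
      unfolding semigroup_alg_def rho_star_def S_def by force
  next
    fix p :: "(int ^ 'n) \<Rightarrow>\<^sub>0 'k" assume "p \<in> semigroup_alg (rho_star \<sigma> w)"
    then have kS: "Poly_Mapping.keys p \<subseteq> S" and kz: "\<forall>m\<in>Poly_Mapping.keys p. ipair m w = 0"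
      unfolding semigroup_alg_def rho_star_def S_def by auto
    have p: "p \<in> semigroup_alg S" using kS unfolding semigroup_alg_def by simp
    have "\<forall>m\<in>Poly_Mapping.keys p. deg D m = 0" using kS kz w by force
    then show "p \<in> lfihd_kernel (dual_lattice \<sigma>) D" using ker'[OF p] p
      unfolding lfihd_kernel_def S_def by blast
  qed
  have dem: "ipair e \<rho>' \<ge> 0" if r: "is_ray \<sigma> \<rho>'" "\<rho>' \<noteq> w" for \<rho>'
  proof (rule ccontr)
    assume "\<not> ipair e \<rho>' \<ge> 0"
    then have c: "ipair e \<rho>' < 0" by simp
    define c where "c = ipair e \<rho>'"
    obtain u' where u': "\<forall>v\<in>\<sigma>. qpair u' v \<ge> 0" "{v\<in>\<sigma>. qpair u' v = 0} = {t *s ratv \<rho>' | t. t \<ge> 0}"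
      and pr: "primitive \<rho>'" using r(1) unfolding is_ray_def by blast
    have "ratv \<rho>' \<in> {t *s ratv \<rho>' | t. t \<ge> 0}" by (rule CollectI, rule exI[of _ 1]) simp
    then have rs: "ratv \<rho>' \<in> \<sigma>" "qpair u' (ratv \<rho>') = 0" using u'(2) by blast+
    have qc: "qpair (ratv e) (ratv \<rho>') = of_int c" unfolding c_def by (rule ipair_qpair[symmetric])
    have dec: "ratv \<rho>' = \<pi> (ratv \<rho>') + (- of_int c) *s ratv w" unfolding \<pi>_def qc by (simp add: vector_smult_lneg)
    have "qpair u' (\<pi> (ratv \<rho>')) + (- of_int c) * qpair u' (ratv w) = 0"
      using rs(2) dec by (metis qpair_add_r qpair_smult_r)
    moreover have "qpair u' (\<pi> (ratv \<rho>')) \<ge> 0" using u'(1) pisig[OF rs(1)] by blast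
    moreover have "qpair u' (ratv w) \<ge> 0" using u'(1) wsig by blast
    moreover have "(- of_int c :: rat) > 0" using c c_def by simp
    ultimately have "qpair u' (ratv w) = 0"
    proof -
      assume h: "qpair u' (\<pi> (ratv \<rho>')) + (- of_int c) * qpair u' (ratv w) = 0"
        "qpair u' (\<pi> (ratv \<rho>')) \<ge> 0" "qpair u' (ratv w) \<ge> 0" "(- of_int c :: rat) > 0"
      have "(- of_int c) * qpair u' (ratv w) \<ge> 0" using h(3,4) by (intro mult_nonneg_nonneg) auto
      then have "(- of_int c) * qpair u' (ratv w) = 0" using h(1,2) by linarith
      then show ?thesis using h(4) by simp
    qed
    then have "ratv w \<in> {t *s ratv \<rho>' | t. t \<ge> 0}" using u'(2) wsig by blast
    then obtain t where t: "ratv w = t *s ratv \<rho>'" "t \<ge> 0" by blast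
    have "t * of_int c = -1" using qew t(1) qc by simp
    then have tc: "t = - 1 / of_int c" using c c_def by (simp add: field_simps)
    have "ratv \<rho>' = (- of_int c) *s ratv w" using t(1) tc c c_def
      by (simp add: vector_smult_assoc field_simps)
    then have "ratv \<rho>' = ratv ((- c) *s w)" by simp
    then have rw: "\<rho>' = (- c) *s w" using ratv_inj by blast
    then have "\<bar>- c\<bar> = 1" using pr unfolding primitive_def by blast
    then have "c = -1" using c c_def by simp
    then show False using rw r(2) by simp
  qed
  have "demazure_root_with \<sigma> e w" unfolding demazure_root_with_def using ray ew dem by blast
  then show ?thesis using ray ker by blast
qed


end
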